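(* The superconnecting filter $\mathcal{F}_\infty$ of the Kirch space satisfies $$\mathcal{F}_\infty=\{B\subseteq\mathbb{N}:\exists q\in\mathbb{N}\text{ odd and square-free with }q\mathbb{N}\subseteq B\}.$$
   Context: $\mathbb{N}=\{1,2,\dots\}$, $\mathbb{N}_0=\{0\}\cup\mathbb{N}$, $q\mathbb{N}=\{qn:n\in\mathbb{N}\}$. The Kirch topology $\tau_K$ on $\mathbb{N}$ is generated by the base of all $a+b\mathbb{N}_0=\{a+bn:n\in\mathbb{N}_0\}$ with $a,b\in\mathbb{N}$ coprime and $b$ square-free (not divisible by the square of a prime). Closures are in $\tau_K$. The superconnecting filter is $\mathcal{F}_\infty=\{B\subseteq\mathbb{N}:\exists n\in\mathbb{N}\ \exists U_1,\dots,U_n\in\tau_K\setminus\{\emptyset\}\ (\overline{U_1}\cap\dots\cap\overline{U_n}\subseteq B)\}$. *)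

theory Defs
  imports "HOL-Analysis.Analysis" "HOL-Computational_Algebra.Squarefree"
begin

definition Npos :: "nat set" where "Npos = {n. n \<ge> 1}"

definition arith_prog :: "nat \<Rightarrow> nat \<Rightarrow> nat set" where
  "arith_prog a b = {a + b * n | n. True}"

definition kirch_base :: "nat set set" where
  "kirch_base = {arith_prog a b | a b. a \<ge> 1 \<and> b \<ge> 1 \<and> coprime a b \<and> squarefree b}"

definition kirch_topology :: "nat topology" where
  "kirch_topology = topology_generated_by kirch_base"

definition mult_set :: "nat \<Rightarrow> nat set" where
  "mult_set q = {q * n | n. n \<ge> 1}"

definition superconnecting_filter :: "nat set set" where
  "superconnecting_filter = {B. B \<subseteq> Npos \<and>
     (\<exists>n \<ge> 1. \<exists>U :: nat \<Rightarrow> nat set.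
        (\<forall>i<n. openin kirch_topology (U i) \<and> U i \<noteq> {}) \<and>
        (\<Inter>i<n. kirch_topology closure_of (U i)) \<subseteq> B)}"

end

theory Submission
  imports Defs
begin

lemma topspace_K: "topspace kirch_topology = Npos"
proof -
  have "\<Union>kirch_base = Npos"
  proof
    show "\<Union>kirch_base \<subseteq> Npos"
      by (auto simp: kirch_base_def arith_prog_def Npos_def)
    have "Npos \<subseteq> arith_prog 1 1"
    proof
      fix x assume "x \<in> Npos"
      then have "x = 1 + 1 * (x - 1)" by (simp add: Npos_def)
      then show "x \<in> arith_prog 1 1" unfolding arith_prog_def by blast
    qed
    moreover have "arith_prog 1 1 \<in> kirch_base"
      unfolding kirch_base_def by (intro CollectI exI[of _ "1::nat"]) simp
    ultimately show "Npos \<subseteq> \<Union>kirch_base" by blast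
  qed
  then show ?thesis by (simp add: kirch_topology_def)
qed

lemma basic_open:
  assumes "a \<ge> 1" "b \<ge> 1" "coprime a b" "squarefree b"
  shows "openin kirch_topology (arith_prog a b)"
  unfolding kirch_topology_def
  by (rule topology_generated_by_Basis) (use assms in \<open>auto simp: kirch_base_def\<close>)

lemma squarefree_lcm_nat:
  fixes a b :: nat
  assumes "squarefree a" "squarefree b"
  shows "squarefree (lcm a b)"
proof -
  have nz: "a \<noteq> 0" "b \<noteq> 0" using assms by (metis not_squarefree_0)+
  then have "lcm a b \<noteq> 0" by simp
  show ?thesis
    unfolding squarefree_factorial_semiring''[OF \<open>lcm a b \<noteq> 0\<close>]
  proof (intro allI impI)
    fix p :: nat assume p: "prime p"
    have "multiplicity p a \<le> 1" "multiplicity p b \<le> 1"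
      using assms nz p squarefree_factorial_semiring'' by blast+
    then show "multiplicity p (lcm a b) \<le> 1"
      using multiplicity_lcm[OF nz p] by simp
  qed
qed

lemma coprime_shift:
  fixes a b k :: nat
  assumes "coprime a b" shows "coprime (a + b * k) b"
proof -
  have "gcd b (k * b + a) = gcd b a" by (rule gcd_add_mult)
  then have "gcd (a + b * k) b = gcd a b" by (simp add: gcd.commute add.commute mult.commute)
  then show ?thesis using assms by (simp add: coprime_iff_gcd_eq_1)
qed

lemma nbhd:
  assumes "openin kirch_topology W" "x \<in> W"
  shows "\<exists>d\<ge>1. coprime x d \<and> squarefree d \<and> arith_prog x d \<subseteq> W"
proof -
  have "generate_topology_on kirch_base W"
    using assms(1) unfolding kirch_topology_def by (rule openin_topology_generated_by)
  then have "\<forall>x\<in>W. \<exists>d\<ge>1. coprime x d \<and> squarefree d \<and> arith_prog x d \<subseteq> W"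
  proof (induction rule: generate_topology_on.induct)
    case Empty
    then show ?case by simp
  next
    case (Int A B)
    show ?case
    proof
      fix x assume "x \<in> A \<inter> B"
      then obtain d d' where d: "d \<ge> 1" "coprime x d" "squarefree d" "arith_prog x d \<subseteq> A"
        and d': "d' \<ge> 1" "coprime x d'" "squarefree d'" "arith_prog x d' \<subseteq> B"
        using Int.IH by blast
      have "arith_prog x (lcm d d') \<subseteq> arith_prog x d"
      proof
        fix y assume "y \<in> arith_prog x (lcm d d')"
        then obtain n where "y = x + lcm d d' * n" by (auto simp: arith_prog_def)
        moreover obtain k where "lcm d d' = d * k" by (meson dvd_lcm1 dvdE)
        ultimately have "y = x + d * (k * n)" by simp
        then show "y \<in> arith_prog x d" by (auto simp: arith_prog_def)
      qed
      moreover have "arith_prog x (lcm d d') \<subseteq> arith_prog x d'"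
      proof
        fix y assume "y \<in> arith_prog x (lcm d d')"
        then obtain n where "y = x + lcm d d' * n" by (auto simp: arith_prog_def)
        moreover obtain k where "lcm d d' = d' * k" by (meson dvd_lcm2 dvdE)
        ultimately have "y = x + d' * (k * n)" by simp
        then show "y \<in> arith_prog x d'" by (auto simp: arith_prog_def)
      qed
      moreover have "lcm d d' \<ge> 1" using d d' by (simp add: Suc_le_eq lcm_pos_nat)
      moreover have "coprime x (lcm d d')"
      proof -
        have "coprime x (d * d')" using d d' by simp
        moreover have "lcm d d' dvd d * d'" by (rule lcm_least) simp_all
        ultimately show ?thesis using coprime_divisors[of x x "lcm d d'" "d * d'"] by simp
      qed
      moreover have "squarefree (lcm d d')" using d d' squarefree_lcm_nat by blast
      ultimately show "\<exists>e\<ge>1. coprime x e \<and> squarefree e \<and> arith_prog x e \<subseteq> A \<inter> B"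
        using d d' by blast
    qed
  next
    case (UN K)
    show ?case
    proof
      fix x assume "x \<in> \<Union>K"
      then obtain k where "k \<in> K" "x \<in> k" by blast
      then show "\<exists>d\<ge>1. coprime x d \<and> squarefree d \<and> arith_prog x d \<subseteq> \<Union>K"
        using UN.IH by blast
    qed
  next
    case (Basis s)
    then obtain a b where s: "s = arith_prog a b" "a \<ge> 1" "b \<ge> 1" "coprime a b" "squarefree b"
      by (auto simp: kirch_base_def)
    show ?case
    proof
      fix x assume "x \<in> s"
      then obtain k where x: "x = a + b * k" using s by (auto simp: arith_prog_def)
      have "coprime x b" using coprime_shift[OF s(4)] x by simp
      moreover have "arith_prog x b \<subseteq> s"
      proof
        fix y assume "y \<in> arith_prog x b"
        then obtain n where "y = x + b * n" by (auto simp: arith_prog_def)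
        then have "y = a + b * (k + n)" using x by (simp add: algebra_simps)
        then show "y \<in> s" using s(1) by (auto simp: arith_prog_def)
      qed
      ultimately show "\<exists>d\<ge>1. coprime x d \<and> squarefree d \<and> arith_prog x d \<subseteq> s"
        using s by blast
    qed
  qed
  then show ?thesis using assms(2) by blast
qed

lemma crt_meet:
  fixes x a d b :: nat
  assumes "d \<ge> 1" "b \<ge> 1" "x mod gcd d b = a mod gcd d b"
  shows "\<exists>n m. x + d * n = a + b * m"
proof -
  have "gcd d b dvd (int x - int a)"
    proof -
    have "int x mod int (gcd d b) = int a mod int (gcd d b)" using assms(3) by (metis of_nat_mod)
    then show ?thesis by (simp add: mod_eq_dvd_iff)
  qed
  then obtain t where t: "int x - int a = int (gcd d b) * t" by (auto elim: dvdE)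
  obtain u v where uv: "u * int d + v * int b = gcd (int d) (int b)" using bezout_int by blast
  have g: "gcd (int d) (int b) = int (gcd d b)" by simp
  define K where "K = \<bar>u * t\<bar> + \<bar>v * t\<bar>"
  define N where "N = - (u * t) + K * int b"
  define M where "M = v * t + K * int d"
  have K0: "K \<ge> 0" by (simp add: K_def)
  have "K * int b \<ge> K" using K0 assms(2) by (simp add: mult_le_cancel_left1)
  then have N0: "N \<ge> 0" unfolding N_def K_def by linarith
  have "K * int d \<ge> K" using K0 assms(1) by (simp add: mult_le_cancel_left1)
  then have M0: "M \<ge> 0" unfolding M_def K_def by linarith
  have "int x + int d * N = int a + int b * M"
  proof -
    have "int x - int a = (u * int d + v * int b) * t" using t uv g by simp
    then show ?thesis unfolding N_def M_def by (simp add: algebra_simps)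
  qed
  then have "int (x + d * nat N) = int (a + b * nat M)" using N0 M0 by simp
  then have "x + d * nat N = a + b * nat M" by (simp only: of_nat_eq_iff)
  then show ?thesis by blast
qed

definition oddpart :: "nat \<Rightarrow> nat" where
  "oddpart b = (if even b then b div 2 else b)"

lemma oddpart_props:
  assumes "b \<ge> 1" "squarefree b"
  shows "oddpart b \<ge> 1" "odd (oddpart b)" "squarefree (oddpart b)" "oddpart b dvd b"
    "b dvd 2 * oddpart b"
proof -
  show "oddpart b dvd b" by (auto simp: oddpart_def)
  then show "squarefree (oddpart b)" using assms squarefree_mono by blast
  show "b dvd 2 * oddpart b" by (auto simp: oddpart_def)
  show "odd (oddpart b)"
  proof (cases "even b")
    case True
    show ?thesis
    proof
      assume "even (oddpart b)"
      then have "2^2 dvd b" using True by (auto simp: oddpart_def power2_eq_square elim!: evenE)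
      then have "(2::nat) dvd 1" using assms(2) squarefreeD by blast
      then show False by simp
    qed
  next
    case False
    then show ?thesis by (simp add: oddpart_def)
  qed
  then show "oddpart b \<ge> 1" by (cases "oddpart b") auto
qed

lemma meet:
  fixes a b x d :: nat
  assumes "b \<ge> 1" "squarefree b" "coprime a b" "d \<ge> 1" "coprime x d" "oddpart b dvd x"
  shows "arith_prog x d \<inter> arith_prog a b \<noteq> {}"
proof -
  let ?g = "gcd d b"
  have cdx: "coprime d x" using assms(5) by (simp add: coprime_commute)
  have c1: "coprime ?g x" by (rule coprime_divisors[OF gcd_dvd1 dvd_refl cdx])
  have c2: "coprime ?g (oddpart b)" by (rule coprime_divisors[OF dvd_refl assms(6) c1])
  have "?g dvd 2 * oddpart b" by (rule dvd_trans[OF gcd_dvd2 oddpart_props(5)[OF assms(1,2)]])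
  then have g2: "?g dvd 2" using coprime_dvd_mult_left_iff[OF c2, of 2] by (simp add: mult.commute)
  have "x mod ?g = a mod ?g"
  proof (cases "?g = 1")
    case True then show ?thesis by simp
  next
    case False
    have "?g \<le> 2" using g2 by (rule dvd_imp_le) simp
    moreover have "?g \<noteq> 0" using assms(4) by simp
    ultimately have "?g = 2" using False by linarith
    then have "2 dvd d" "2 dvd b" using gcd_dvd1[of d b] gcd_dvd2[of d b] by simp_all
    have "odd x"
    proof
      assume "even x"
      then have "is_unit (2::nat)" using coprime_common_divisor[OF assms(5)] \<open>2 dvd d\<close> by blast
      then show False by simp
    qed
    moreover have "odd a"
    proof
      assume "even a"
      then have "is_unit (2::nat)" using coprime_common_divisor[OF assms(3)] \<open>2 dvd b\<close> by blast
      then show False by simp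
    qed
    ultimately have "odd x" "odd a" by blast+
    then show ?thesis using \<open>?g = 2\<close> by (simp add: odd_iff_mod_2_eq_one)
  qed
  then obtain n m where e: "x + d * n = a + b * m" using crt_meet assms by blast
  have "x + d * n \<in> arith_prog x d" unfolding arith_prog_def by blast
  moreover have "x + d * n \<in> arith_prog a b" unfolding arith_prog_def e by blast
  ultimately have "x + d * n \<in> arith_prog x d \<inter> arith_prog a b" by blast
  then show ?thesis by blast
qed

lemma closure_basic:
  fixes a b :: nat
  assumes "b \<ge> 1" "squarefree b" "coprime a b"
  shows "mult_set (oddpart b) \<subseteq> kirch_topology closure_of (arith_prog a b)"
proof
  fix y assume "y \<in> mult_set (oddpart b)"
  then obtain k where k: "y = oddpart b * k" "k \<ge> 1" by (auto simp: mult_set_def)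
  have "oddpart b * k \<ge> 1 * 1" by (rule mult_le_mono[OF oddpart_props(1)[OF assms(1,2)] k(2)])
  then have "y \<ge> 1" unfolding k(1) by simp
  then have ts: "y \<in> topspace kirch_topology" by (simp add: topspace_K Npos_def)
  have ex: "\<exists>z. z \<in> arith_prog a b \<and> z \<in> T" if yT: "y \<in> T" and oT: "openin kirch_topology T" for T
  proof -
    obtain d where d: "d \<ge> 1" "coprime y d" "squarefree d" "arith_prog y d \<subseteq> T"
      using nbhd[OF oT yT] by blast
    have dv: "oddpart b dvd y" unfolding k(1) by (rule dvd_triv_left)
    have "arith_prog y d \<inter> arith_prog a b \<noteq> {}"
      by (rule meet[OF assms(1,2,3) d(1,2) dv])
    then obtain z where "z \<in> arith_prog y d" "z \<in> arith_prog a b" by blast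
    then show ?thesis using d(4) by blast
  qed
  show "y \<in> kirch_topology closure_of (arith_prog a b)"
    unfolding in_closure_of using ts ex by blast
qed

lemma mult_set_mono:
  assumes "q dvd q'" "q' \<noteq> 0" shows "mult_set q' \<subseteq> mult_set q"
proof
  fix y assume "y \<in> mult_set q'"
  then obtain n where n: "y = q' * n" "n \<ge> 1" by (auto simp: mult_set_def)
  obtain k where k: "q' = q * k" using assms by blast
  show "y \<in> mult_set q"
  proof (cases "k = 0")
    case True
    then show ?thesis using k assms(2) by simp
  next
    case False
    have e: "y = q * (k * n)" using n(1) k by (simp add: mult.assoc)
    have "1 * 1 \<le> k * n" by (rule mult_le_mono) (use False n(2) in auto)
    then have "k * n \<ge> 1" by simp
    then show ?thesis unfolding mult_set_def e by blast
  qed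
qed

lemma common_q:
  fixes n :: nat and C :: "nat \<Rightarrow> nat set"
  assumes "\<forall>i<n. \<exists>q\<ge>1. odd q \<and> squarefree q \<and> mult_set q \<subseteq> C i"
  shows "\<exists>q\<ge>1. odd q \<and> squarefree q \<and> (\<forall>i<n. mult_set q \<subseteq> C i)"
  using assms
proof (induction n)
  case 0
  then show ?case by (intro exI[of _ 1]) simp
next
  case (Suc n)
  then obtain q where q: "q \<ge> 1" "odd q" "squarefree q" "\<forall>i<n. mult_set q \<subseteq> C i" by auto
  obtain r where r: "r \<ge> 1" "odd r" "squarefree r" "mult_set r \<subseteq> C n" using Suc.prems by auto
  have "lcm q r \<ge> 1" using q r by (simp add: Suc_le_eq lcm_pos_nat)
  moreover have "odd (lcm q r)"
    proof
    assume "even (lcm q r)"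
    moreover have "lcm q r dvd q * r" by (rule lcm_least) simp_all
    ultimately have "even (q * r)" using dvd_trans by blast
    then show False using q r by simp
  qed
  moreover have "squarefree (lcm q r)" using q r squarefree_lcm_nat by blast
  moreover have "\<forall>i<Suc n. mult_set (lcm q r) \<subseteq> C i"
  proof (intro allI impI)
    fix i assume "i < Suc n"
    have nz: "lcm q r \<noteq> 0" using \<open>lcm q r \<ge> 1\<close> by linarith
    have m1: "mult_set (lcm q r) \<subseteq> mult_set q" by (rule mult_set_mono[OF dvd_lcm1 nz])
    have m2: "mult_set (lcm q r) \<subseteq> mult_set r" by (rule mult_set_mono[OF dvd_lcm2 nz])
    show "mult_set (lcm q r) \<subseteq> C i"
    proof (cases "i = n")
      case True
      then show ?thesis using m2 r(4) by blast
    next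
      case False
      then have "i < n" using \<open>i < Suc n\<close> by linarith
      then show ?thesis using m1 q(4) by blast
    qed
  qed
  ultimately show ?case by blast
qed

lemma sqf_dvd:
  fixes q x :: nat
  assumes "squarefree q" "x \<ge> 1" "\<forall>p. prime p \<longrightarrow> p dvd q \<longrightarrow> p dvd x"
  shows "q dvd x"
proof -
  have q0: "q \<noteq> 0" using assms(1) by (metis not_squarefree_0)
  have x0: "x \<noteq> 0" using assms(2) by auto
  show ?thesis
  proof (rule multiplicity_le_imp_dvd[OF q0])
    fix p :: nat assume p: "prime p"
    have "\<forall>p. prime p \<longrightarrow> multiplicity p q \<le> 1"
      using squarefree_factorial_semiring''[OF q0] assms(1) by simp
    then have le1: "multiplicity p q \<le> 1" using p by blast
    show "multiplicity p q \<le> multiplicity p x"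
    proof (cases "multiplicity p q = 0")
      case False
      have "p dvd q"
      proof (rule ccontr)
        assume "\<not> p dvd q"
        then have "multiplicity p q = 0" by (rule not_dvd_imp_multiplicity_0)
        then show False using False by simp
      qed
      then have "p dvd x" using assms(3) p by blast
      have pe: "prime_elem p" by (rule prime_imp_prime_elem[OF p])
      have "multiplicity p x > 0"
        using prime_multiplicity_gt_zero_iff[OF pe x0] \<open>p dvd x\<close> by simp
      then show ?thesis using le1 by simp
    qed simp
  qed
qed

lemma closure_two:
  fixes q x :: nat
  assumes "q \<ge> 1" "odd q" "squarefree q"
    and x1: "x \<in> kirch_topology closure_of arith_prog 1 q"
    and x2: "x \<in> kirch_topology closure_of arith_prog 2 q"
  shows "x \<in> mult_set q"
proof -
  have "x \<in> topspace kirch_topology" using x1 by (simp add: in_closure_of)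
  then have x0: "x \<ge> 1" by (simp add: topspace_K Npos_def)
  have "\<forall>p. prime p \<longrightarrow> p dvd q \<longrightarrow> p dvd x"
  proof (intro allI impI, rule ccontr)
    fix p :: nat assume p: "prime p" "p dvd q" "\<not> p dvd x"
    have op: "openin kirch_topology (arith_prog x p)"
    proof (rule basic_open[OF x0])
      show "1 \<le> p" using prime_gt_0_nat[OF p(1)] by simp
      show "squarefree p" by (rule squarefree_prime[OF p(1)])
      have "coprime p x" by (rule prime_imp_coprime[OF p(1,3)])
      then show "coprime x p" by (simp add: coprime_commute)
    qed
    have xin: "x \<in> arith_prog x p" by (auto simp: arith_prog_def)
    have "x mod p = c mod p" if "x \<in> kirch_topology closure_of arith_prog c q" for c
    proof -
      have "\<forall>T. x \<in> T \<and> openin kirch_topology T \<longrightarrow> (\<exists>y. y \<in> arith_prog c q \<and> y \<in> T)"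
        using that by (simp add: in_closure_of)
      then obtain z where "z \<in> arith_prog c q" "z \<in> arith_prog x p"
        using op xin by blast
      obtain m where "z = c + q * m" using \<open>z \<in> arith_prog c q\<close> by (auto simp: arith_prog_def)
      moreover obtain n where "z = x + p * n" using \<open>z \<in> arith_prog x p\<close> by (auto simp: arith_prog_def)
      ultimately have e: "c + q * m = x + p * n" by simp
      obtain k where k: "q = p * k" using p(2) by blast
      have "c + p * (k * m) = x + p * n" using e unfolding k by (simp only: mult.assoc)
      then have "(c + p * (k * m)) mod p = (x + p * n) mod p" by (rule arg_cong)
      then show ?thesis by (simp only: mod_mult_self2)
    qed
    from this[OF x1] this[OF x2] have "1 mod p = 2 mod p" by simp
    moreover have "p > 1" using p(1) prime_gt_1_nat by blast
    ultimately show False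
    proof (cases "p = 2")
      case False
      then have "p > 2" using \<open>p > 1\<close> by linarith
      then have "1 mod p = 1" "2 mod p = 2" by simp_all
      then show False using \<open>1 mod p = 2 mod p\<close> by simp
    qed simp
  qed
  then have "q dvd x" by (rule sqf_dvd[OF assms(3) x0])
  then obtain k where "x = q * k" by blast
  moreover have "k \<ge> 1" using x0 calculation by (cases k) auto
  ultimately show ?thesis by (auto simp: mult_set_def)
qed

theorem lemma3p7:
  shows "superconnecting_filter =
    {B. B \<subseteq> Npos \<and> (\<exists>q \<ge> 1. odd q \<and> squarefree q \<and> mult_set q \<subseteq> B)}"
proof (intro equalityI subsetI)
  fix B assume "B \<in> superconnecting_filter"
  then have "B \<subseteq> Npos \<and> (\<exists>n \<ge> 1. \<exists>U :: nat \<Rightarrow> nat set.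
        (\<forall>i<n. openin kirch_topology (U i) \<and> U i \<noteq> {}) \<and>
        (\<Inter>i<n. kirch_topology closure_of (U i)) \<subseteq> B)"
    unfolding superconnecting_filter_def by (rule CollectD)
  then obtain n :: nat and U :: "nat \<Rightarrow> nat set" where B: "B \<subseteq> Npos" "n \<ge> 1"
    "\<forall>i<n. openin kirch_topology (U i) \<and> U i \<noteq> {}"
    "(\<Inter>i<n. kirch_topology closure_of (U i)) \<subseteq> B"
    by blast
  have "\<forall>i<n. \<exists>q\<ge>1. odd q \<and> squarefree q \<and> mult_set q \<subseteq> kirch_topology closure_of (U i)"
  proof (intro allI impI)
    fix i assume "i < n"
    then obtain x where x: "x \<in> U i" "openin kirch_topology (U i)" using B(3) by blast
    obtain d where d: "d \<ge> 1" "coprime x d" "squarefree d" "arith_prog x d \<subseteq> U i"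
      using nbhd[OF x(2) x(1)] by blast
    have "mult_set (oddpart d) \<subseteq> kirch_topology closure_of (arith_prog x d)"
      by (rule closure_basic[OF d(1,3,2)])
    also have "\<dots> \<subseteq> kirch_topology closure_of (U i)"
      by (rule closure_of_mono[OF d(4)])
    finally have "mult_set (oddpart d) \<subseteq> kirch_topology closure_of (U i)" .
    moreover note oddpart_props[OF d(1,3)]
    ultimately show "\<exists>q\<ge>1. odd q \<and> squarefree q \<and> mult_set q \<subseteq> kirch_topology closure_of (U i)"
      by blast
  qed
  then obtain q where q: "q \<ge> 1" "odd q" "squarefree q"
    "\<forall>i<n. mult_set q \<subseteq> kirch_topology closure_of (U i)"
    using common_q[of n "\<lambda>i. kirch_topology closure_of (U i)"] by blast
  have "mult_set q \<subseteq> (\<Inter>i<n. kirch_topology closure_of (U i))"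
    by (rule INT_greatest) (use q(4) in simp)
  then have "mult_set q \<subseteq> B" using B(4) by (rule subset_trans)
  then show "B \<in> {B. B \<subseteq> Npos \<and> (\<exists>q \<ge> 1. odd q \<and> squarefree q \<and> mult_set q \<subseteq> B)}"
    using q B(1) by blast
next
  fix B assume "B \<in> {B. B \<subseteq> Npos \<and> (\<exists>q \<ge> 1. odd q \<and> squarefree q \<and> mult_set q \<subseteq> B)}"
  then obtain q where q: "B \<subseteq> Npos" "q \<ge> 1" "odd q" "squarefree q" "mult_set q \<subseteq> B" by blast
  define U where "U = (\<lambda>i::nat. if i = 0 then arith_prog 1 q else arith_prog 2 q)"
  have "\<forall>i<2. openin kirch_topology (U i) \<and> U i \<noteq> {}"
  proof (intro allI impI)
    fix i :: nat assume "i < 2"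
    have c2: "coprime 2 q" using q(3) by (simp add: coprime_commute)
    have ne: "c \<in> arith_prog c q" for c by (auto simp: arith_prog_def)
    have o1: "openin kirch_topology (arith_prog 1 q)" by (rule basic_open) (use q in simp_all)
    have o2: "openin kirch_topology (arith_prog 2 q)" by (rule basic_open) (use q c2 in simp_all)
    show "openin kirch_topology (U i) \<and> U i \<noteq> {}"
      unfolding U_def using o1 o2 ne[of 1] ne[of 2] by auto
  qed
  moreover have "(\<Inter>i<2. kirch_topology closure_of (U i)) \<subseteq> B"
  proof
    fix x assume "x \<in> (\<Inter>i<(2::nat). kirch_topology closure_of (U i))"
    then have "\<forall>i\<in>{..<2::nat}. x \<in> kirch_topology closure_of U i" by simp
    then have "x \<in> kirch_topology closure_of U 0" "x \<in> kirch_topology closure_of U 1"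
      by simp_all
    then have "x \<in> kirch_topology closure_of arith_prog 1 q"
      "x \<in> kirch_topology closure_of arith_prog 2 q"
      unfolding U_def by simp_all
    then have "x \<in> mult_set q" by (rule closure_two[OF q(2,3,4)])
    then show "x \<in> B" using q by blast
  qed
  ultimately have "\<exists>n \<ge> 1. \<exists>U :: nat \<Rightarrow> nat set.
        (\<forall>i<n. openin kirch_topology (U i) \<and> U i \<noteq> {}) \<and>
        (\<Inter>i<n. kirch_topology closure_of (U i)) \<subseteq> B"
    by (intro exI[of _ "2::nat"] conjI exI[of _ U]) simp_all
  then show "B \<in> superconnecting_filter"
    unfolding superconnecting_filter_def using q(1) by blast
qed

end
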